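(* Suppose a strategy is relative growth optimal for investor $m$, and consider any feasible strategy profile and initial wealth $y_0\in\mathbb{R}^M_{++}$ in which investor $m$ uses it, with wealth process $Y$. Then investor $m$ survives in the sense that $\inf_{t\ge0}r^m_t>0$ a.s., and for every investor $k$, $$\limsup_{t\to\infty}\frac1t\ln Y^m_t\ \ge\ \limsup_{t\to\infty}\frac1t\ln Y^k_t\quad\text{a.s.}$$
   Context: Setting: $(\Omega,\mathcal{F},\mathbb{F}=(\mathcal{F}_t)_{t\ge0},\mathbb{P})$ filtered probability space with usual conditions, $\mathcal{P}$ predictable $\sigma$-algebra. $|x|=\sum_n|x^n|$; for $x\in\mathbb{R}^{MN}$, $x^m=(x^{m,n})_n$, $x^{\cdot,n}=(x^{m,n})_m$. $M\ge2$ investors, $N\ge1$ assets. Payoff process $X$: adapted, nondecreasing, càdlàg, $\mathbb{R}^N_+$-valued, $X_0=0$; $X^c_t=X_t-\sum_{0<s\le t}\Delta X_s$; $\nu$ the compensator of its jump measure; $G_t=|X^c_t|+(|x|\wedge1)*\nu_t$. Strategies: $D$ = càdlàg $y\colon\mathbb{R}_+\to\mathbb{R}^M_+$, $\mathcal{D}_t=\sigma(y_u,u\le t)$, $E=\Omega\times D$, $\mathcal{E}_t=\mathcal{F}_t\otimes\mathcal{D}_t$, $\mathcal{P}^E$ the $\sigma$-algebra on $E\times\mathbb{R}_+$ generated by measurable functions left-continuous in $t$ and $\mathcal{E}_t$-measurable for fixed $t$. A strategy is a $\mathcal{P}^E$-measurable $\boldsymbol{L}_t(\omega,y)\in\mathbb{R}^N_+$,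 $\boldsymbol{L}_0=0$, nondecreasing càdlàg in $t$. Feasibility: for predictable nondecreasing càdlàg $H$ with $G\ll H$, $dL/dH$ is a predictable version of the Lebesgue derivative of the measure $\mathbb{P}\otimes L(A)=\mathbb{E}\int\mathbb{1}_A\,dL$ w.r.t. $\mathbb{P}\otimes H$ on $\mathcal{P}$. A profile $(\boldsymbol{L}^1,\dots,\boldsymbol{L}^M)$ and $y_0\in\mathbb{R}^M_{++}$ are feasible if there is a unique (up to indistinguishability) nonnegative càdlàg adapted $\mathbb{R}^M_+$-valued process $Y$ such that (1) for each $m$, a.s. for all $t$, $Y^m_t=y^m_0-|L^m_t|+\sum_n\int_0^t\frac{l^{m,n}_s}{|l^{\cdot,n}_s|}dX^n_s$ with $L^m_t(\omega)=\boldsymbol{L}^m_t(\omega,Y(\omega))$, $l^{m,n}=dL^{m,n}/dH$, $0/0=0$; (2) if $Y^m_t(\omega)=0$ or $Y^m_{t-}(\omega)=0$, then $L^m_s(\omega)=L^m_{t-}(\omega)$ and $Y^m_s(\omega)=0$ for all $s\ge t$. Relative wealth: $r^m_t=Y^m_t/|Y_t|$ ($:=0$ if $|Y_t|=0$). A strategy is relative growth optimal for investor $m$ if for any feasible initial wealth and strategy profile in which investor $m$ uses it, $Y^m_t>0$ for all $t\ge0$ and $\ln r^m$ is a submartingale. In the growth-rate inequality, $\ln 0:=-\infty$. *)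

theory Defs
  imports "HOL-Probability.Probability"
begin

text \<open>Time is the real line; only t \<ge> 0 is meaningful. Paths are extended to
negative times by their value at 0.\<close>

definition ext0 :: "(real \<Rightarrow> 'b) \<Rightarrow> real \<Rightarrow> 'b" where
  "ext0 f = (\<lambda>t. f (max 0 t))"

definition lft :: "(real \<Rightarrow> real) \<Rightarrow> real \<Rightarrow> real" where
  "lft f t = (if t \<le> 0 then f 0 else Lim (at_left t) f)"

definition cadlag :: "(real \<Rightarrow> real) \<Rightarrow> bool" where
  "cadlag f \<longleftrightarrow> (\<forall>t\<ge>0. continuous (at_right t) f) \<and>
                 (\<forall>t>0. \<exists>l. (f \<longlongrightarrow> l) (at_left t))"

text \<open>Lebesgue--Stieltjes measure dF on (0,\<infinity>) of a path F on [0,\<infinity>).\<close>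
definition LS :: "(real \<Rightarrow> real) \<Rightarrow> real measure" where
  "LS f = interval_measure (ext0 f)"

definition l1 :: "('i::finite \<Rightarrow> real) \<Rightarrow> real" where
  "l1 x = (\<Sum>i\<in>UNIV. \<bar>x i\<bar>)"

definition usual_filtration :: "'a measure \<Rightarrow> (real \<Rightarrow> 'a measure) \<Rightarrow> bool" where
  "usual_filtration M F \<longleftrightarrow>
     complete_measure M \<and>
     (\<forall>t\<ge>0. subalgebra M (F t)) \<and>
     (\<forall>s t. 0 \<le> s \<longrightarrow> s \<le> t \<longrightarrow> sets (F s) \<subseteq> sets (F t)) \<and>
     (\<forall>t\<ge>0. sets (F t) = (\<Inter>u\<in>{t<..}. sets (F u))) \<and>
     null_sets M \<subseteq> sets (F 0)"

definition lc_adapted :: "'s measure \<Rightarrow> (real \<Rightarrow> 's measure) \<Rightarrow> ('s \<times> real \<Rightarrow> real) set" where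
  "lc_adapted B G = {f. f \<in> borel_measurable (B \<Otimes>\<^sub>M restrict_space borel {0..}) \<and>
      (\<forall>t\<ge>0. (\<lambda>x. f (x, t)) \<in> borel_measurable (G t)) \<and>
      (\<forall>x\<in>space B. \<forall>t>0. continuous (at_left t) (\<lambda>s. f (x, s)))}"

definition pred_sa :: "'s measure \<Rightarrow> (real \<Rightarrow> 's measure) \<Rightarrow> ('s \<times> real) measure" where
  "pred_sa B G = sigma (space B \<times> {0..})
     {f -` A \<inter> (space B \<times> {0..}) | f A. f \<in> lc_adapted B G \<and> A \<in> sets (borel :: real measure)}"

definition Dset :: "(real \<Rightarrow> 'm \<Rightarrow> real) set" where
  "Dset = {y. (\<forall>t. y t = y (max 0 t)) \<and> (\<forall>t k. 0 \<le> y t k) \<and> (\<forall>k. cadlag (\<lambda>t. y t k))}"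

definition Dmeas :: "real \<Rightarrow> (real \<Rightarrow> 'm \<Rightarrow> real) measure" where
  "Dmeas t = sigma Dset
     {(\<lambda>y. y u k) -` A \<inter> Dset | u k A. 0 \<le> u \<and> u \<le> t \<and> A \<in> sets (borel :: real measure)}"

definition Dall :: "(real \<Rightarrow> 'm \<Rightarrow> real) measure" where
  "Dall = sigma Dset
     {(\<lambda>y. y u k) -` A \<inter> Dset | u k A. 0 \<le> u \<and> A \<in> sets (borel :: real measure)}"

definition Pred :: "'a measure \<Rightarrow> (real \<Rightarrow> 'a measure) \<Rightarrow> ('a \<times> real) measure" where
  "Pred M F = pred_sa M F"

definition PredE :: "'a measure \<Rightarrow> (real \<Rightarrow> 'a measure) \<Rightarrow>
    (('a \<times> (real \<Rightarrow> 'm \<Rightarrow> real)) \<times> real) measure" where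
  "PredE M F = pred_sa (M \<Otimes>\<^sub>M Dall) (\<lambda>t. F t \<Otimes>\<^sub>M Dmeas t)"

type_synonym ('a, 'm, 'n) strategy = "'a \<times> (real \<Rightarrow> 'm \<Rightarrow> real) \<Rightarrow> real \<Rightarrow> 'n \<Rightarrow> real"

definition is_strategy :: "'a measure \<Rightarrow> (real \<Rightarrow> 'a measure) \<Rightarrow> ('a, 'm, 'n) strategy \<Rightarrow> bool" where
  "is_strategy M F L \<longleftrightarrow>
     (\<forall>n. (\<lambda>(e, t). L e t n) \<in> borel_measurable (PredE M F)) \<and>
     (\<forall>e\<in>space M \<times> Dset. \<forall>n. L e 0 n = 0 \<and> (\<forall>t\<ge>0. 0 \<le> L e t n) \<and>
        mono_on {0..} (\<lambda>t. L e t n) \<and> cadlag (\<lambda>t. L e t n))"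

definition payoff_process :: "'a measure \<Rightarrow> (real \<Rightarrow> 'a measure) \<Rightarrow> ('a \<Rightarrow> real \<Rightarrow> 'n \<Rightarrow> real) \<Rightarrow> bool" where
  "payoff_process M F X \<longleftrightarrow>
     (\<forall>t\<ge>0. \<forall>n. (\<lambda>\<omega>. X \<omega> t n) \<in> borel_measurable (F t)) \<and>
     (\<forall>\<omega>\<in>space M. \<forall>n. X \<omega> 0 n = 0 \<and> (\<forall>t\<ge>0. 0 \<le> X \<omega> t n) \<and>
        mono_on {0..} (\<lambda>t. X \<omega> t n) \<and> cadlag (\<lambda>t. X \<omega> t n))"

definition jump :: "('a \<Rightarrow> real \<Rightarrow> 'n \<Rightarrow> real) \<Rightarrow> 'a \<Rightarrow> real \<Rightarrow> 'n \<Rightarrow> real" where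
  "jump X \<omega> s = (\<lambda>n. X \<omega> s n - lft (\<lambda>u. X \<omega> u n) s)"

definition Xcont :: "('a \<Rightarrow> real \<Rightarrow> 'n \<Rightarrow> real) \<Rightarrow> 'a \<Rightarrow> real \<Rightarrow> 'n \<Rightarrow> real" where
  "Xcont X \<omega> t n = X \<omega> t n - (\<Sum>\<^sub>\<infinity>s\<in>{0<..t}. jump X \<omega> s n)"

definition int_jump :: "('a \<Rightarrow> real \<Rightarrow> 'n \<Rightarrow> real) \<Rightarrow> (('a \<times> real) \<times> ('n \<Rightarrow> real) \<Rightarrow> ennreal)
     \<Rightarrow> 'a \<Rightarrow> real set \<Rightarrow> ennreal" where
  "int_jump X W \<omega> I = (\<Sum>\<^sub>\<infinity>s\<in>{s\<in>I. \<exists>n. jump X \<omega> s n \<noteq> 0}. W ((\<omega>, s), jump X \<omega> s))"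

definition int_rm :: "('a \<Rightarrow> (real \<times> ('n \<Rightarrow> real)) measure) \<Rightarrow> (('a \<times> real) \<times> ('n \<Rightarrow> real) \<Rightarrow> ennreal)
     \<Rightarrow> 'a \<Rightarrow> real set \<Rightarrow> ennreal" where
  "int_rm \<nu> W \<omega> I = (\<integral>\<^sup>+ z. indicator I (fst z) * W ((\<omega>, fst z), snd z) \<partial>(\<nu> \<omega>))"

definition jump_compensator :: "'a measure \<Rightarrow> (real \<Rightarrow> 'a measure) \<Rightarrow> ('a \<Rightarrow> real \<Rightarrow> 'n::finite \<Rightarrow> real)
     \<Rightarrow> ('a \<Rightarrow> (real \<times> ('n \<Rightarrow> real)) measure) \<Rightarrow> bool" where
  "jump_compensator M F X \<nu> \<longleftrightarrow>
     (\<forall>\<omega>\<in>space M. sets (\<nu> \<omega>) = sets (borel :: (real \<times> ('n \<Rightarrow> real)) measure)) \<and>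
     (\<forall>W \<in> borel_measurable (Pred M F \<Otimes>\<^sub>M (borel :: ('n \<Rightarrow> real) measure)).
        (\<lambda>(\<omega>, t). int_rm \<nu> W \<omega> {0<..t}) \<in> borel_measurable (Pred M F) \<and>
        (\<integral>\<^sup>+ \<omega>. int_jump X W \<omega> {0<..} \<partial>M) = (\<integral>\<^sup>+ \<omega>. int_rm \<nu> W \<omega> {0<..} \<partial>M))"

definition Gproc :: "('a \<Rightarrow> real \<Rightarrow> 'n::finite \<Rightarrow> real) \<Rightarrow> ('a \<Rightarrow> (real \<times> ('n \<Rightarrow> real)) measure)
     \<Rightarrow> 'a \<Rightarrow> real \<Rightarrow> real" where
  "Gproc X \<nu> \<omega> t = l1 (Xcont X \<omega> t) +
     enn2real (int_rm \<nu> (\<lambda>(_, x). ennreal (min (l1 x) 1)) \<omega> {0<..t})"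

definition admissible_H :: "'a measure \<Rightarrow> (real \<Rightarrow> 'a measure) \<Rightarrow> ('a \<Rightarrow> real \<Rightarrow> 'n::finite \<Rightarrow> real)
     \<Rightarrow> ('a \<Rightarrow> (real \<times> ('n \<Rightarrow> real)) measure) \<Rightarrow> ('a \<Rightarrow> real \<Rightarrow> real) \<Rightarrow> bool" where
  "admissible_H M F X \<nu> H \<longleftrightarrow>
     (\<lambda>(\<omega>, t). H \<omega> t) \<in> borel_measurable (Pred M F) \<and>
     (\<forall>\<omega>\<in>space M. mono_on {0..} (H \<omega>) \<and> cadlag (H \<omega>)) \<and>
     (AE \<omega> in M. absolutely_continuous (LS (H \<omega>)) (LS (Gproc X \<nu> \<omega>)))"

definition PxZ :: "'a measure \<Rightarrow> ('a \<Rightarrow> real \<Rightarrow> real) \<Rightarrow> ('a \<times> real) set \<Rightarrow> ('a \<times> real \<Rightarrow> ennreal) \<Rightarrow> ennreal" where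
  "PxZ M Z A g = (\<integral>\<^sup>+ \<omega>. (\<integral>\<^sup>+ s. indicator A (\<omega>, s) * g (\<omega>, s) \<partial>LS (Z \<omega>)) \<partial>M)"

text \<open>f is a predictable version of the Lebesgue derivative of P \<otimes> L w.r.t. P \<otimes> H on P:
P \<otimes> L = f \<cdot> (P \<otimes> H) + (singular part), the singular part concentrated on a
(P \<otimes> H)-null predictable set.\<close>
definition leb_deriv :: "'a measure \<Rightarrow> (real \<Rightarrow> 'a measure) \<Rightarrow> ('a \<Rightarrow> real \<Rightarrow> real)
     \<Rightarrow> ('a \<Rightarrow> real \<Rightarrow> real) \<Rightarrow> ('a \<times> real \<Rightarrow> real) \<Rightarrow> bool" where
  "leb_deriv M F H L f \<longleftrightarrow>
     f \<in> borel_measurable (Pred M F) \<and> (\<forall>z. 0 \<le> f z) \<and>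
     (\<exists>S\<in>sets (Pred M F). PxZ M H S (\<lambda>_. 1) = 0 \<and>
        (\<forall>A\<in>sets (Pred M F).
           PxZ M L A (\<lambda>_. 1) = PxZ M H A (\<lambda>z. ennreal (f z)) + PxZ M L (A \<inter> S) (\<lambda>_. 1)))"

definition Lproc :: "('m \<Rightarrow> ('a, 'm, 'n) strategy) \<Rightarrow> ('a \<Rightarrow> real \<Rightarrow> 'm \<Rightarrow> real)
     \<Rightarrow> 'm \<Rightarrow> 'n \<Rightarrow> 'a \<Rightarrow> real \<Rightarrow> real" where
  "Lproc Ls Y m n \<omega> t = Ls m (\<omega>, ext0 (Y \<omega>)) t n"

definition is_wealth :: "'a measure \<Rightarrow> (real \<Rightarrow> 'a measure) \<Rightarrow> ('a \<Rightarrow> real \<Rightarrow> 'n::finite \<Rightarrow> real)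
     \<Rightarrow> ('m::finite \<Rightarrow> real) \<Rightarrow> ('m \<Rightarrow> ('a, 'm, 'n) strategy) \<Rightarrow> ('a \<Rightarrow> real \<Rightarrow> 'm \<Rightarrow> real) \<Rightarrow> bool" where
  "is_wealth M F X y0 Ls Y \<longleftrightarrow>
     (\<forall>t\<ge>0. \<forall>m. (\<lambda>\<omega>. Y \<omega> t m) \<in> borel_measurable (F t)) \<and>
     (\<forall>\<omega>\<in>space M. \<forall>m. cadlag (\<lambda>t. Y \<omega> t m) \<and> (\<forall>t\<ge>0. 0 \<le> Y \<omega> t m)) \<and>
     (\<forall>\<nu> H l. jump_compensator M F X \<nu> \<and> admissible_H M F X \<nu> H \<and>
        (\<forall>m n. leb_deriv M F H (Lproc Ls Y m n) (l m n)) \<longrightarrow>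
        (\<forall>m. AE \<omega> in M. \<forall>t\<ge>0.
           Y \<omega> t m = y0 m - (\<Sum>n\<in>UNIV. Lproc Ls Y m n \<omega> t)
             + (\<Sum>n\<in>UNIV. \<integral>s. indicator {0<..t} s *
                   (l m n (\<omega>, s) / (\<Sum>k\<in>UNIV. l k n (\<omega>, s))) \<partial>LS (\<lambda>u. X \<omega> u n)))) \<and>
     (\<forall>\<omega>\<in>space M. \<forall>m. \<forall>t\<ge>0.
        (Y \<omega> t m = 0 \<or> lft (\<lambda>u. Y \<omega> u m) t = 0) \<longrightarrow>
        (\<forall>s\<ge>t. (\<forall>n. Lproc Ls Y m n \<omega> s = lft (Lproc Ls Y m n \<omega>) t) \<and> Y \<omega> s m = 0))"

definition feasible :: "'a measure \<Rightarrow> (real \<Rightarrow> 'a measure) \<Rightarrow> ('a \<Rightarrow> real \<Rightarrow> 'n::finite \<Rightarrow> real)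
     \<Rightarrow> ('m::finite \<Rightarrow> real) \<Rightarrow> ('m \<Rightarrow> ('a, 'm, 'n) strategy) \<Rightarrow> bool" where
  "feasible M F X y0 Ls \<longleftrightarrow>
     (\<forall>m. is_strategy M F (Ls m)) \<and>
     (\<exists>Y. is_wealth M F X y0 Ls Y \<and>
        (\<forall>Y'. is_wealth M F X y0 Ls Y' \<longrightarrow> (AE \<omega> in M. \<forall>t\<ge>0. Y' \<omega> t = Y \<omega> t)))"

text \<open>Relative wealth r^m_t = Y^m_t / |Y_t| (:= 0 if |Y_t| = 0, automatic as x/0 = 0).\<close>
definition relw :: "('a \<Rightarrow> real \<Rightarrow> 'm::finite \<Rightarrow> real) \<Rightarrow> 'a \<Rightarrow> real \<Rightarrow> 'm \<Rightarrow> real" where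
  "relw Y \<omega> t m = Y \<omega> t m / (\<Sum>k\<in>UNIV. Y \<omega> t k)"

definition submartingale :: "'a measure \<Rightarrow> (real \<Rightarrow> 'a measure) \<Rightarrow> (real \<Rightarrow> 'a \<Rightarrow> real) \<Rightarrow> bool" where
  "submartingale M F Z \<longleftrightarrow>
     (\<forall>t\<ge>0. Z t \<in> borel_measurable (F t) \<and> integrable M (Z t)) \<and>
     (\<forall>s t. 0 \<le> s \<longrightarrow> s \<le> t \<longrightarrow> (AE \<omega> in M. Z s \<omega> \<le> real_cond_exp M (F s) (Z t) \<omega>))"

definition rel_growth_optimal :: "'a measure \<Rightarrow> (real \<Rightarrow> 'a measure) \<Rightarrow> ('a \<Rightarrow> real \<Rightarrow> 'n::finite \<Rightarrow> real)
     \<Rightarrow> 'm::finite \<Rightarrow> ('a, 'm, 'n) strategy \<Rightarrow> bool" where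
  "rel_growth_optimal M F X m L \<longleftrightarrow>
     is_strategy M F L \<and>
     (\<forall>y0 Ls Y. (\<forall>k. 0 < y0 k) \<and> feasible M F X y0 Ls \<and> Ls m = L \<and> is_wealth M F X y0 Ls Y \<longrightarrow>
        (AE \<omega> in M. \<forall>t\<ge>0. 0 < Y \<omega> t m) \<and>
        submartingale M F (\<lambda>t \<omega>. ln (relw Y \<omega> t m)))"

definition eln :: "real \<Rightarrow> ereal" where
  "eln x = (if 0 < x then ereal (ln x) else -\<infinity>)"

definition growth_rate :: "('a \<Rightarrow> real \<Rightarrow> 'm \<Rightarrow> real) \<Rightarrow> 'a \<Rightarrow> 'm \<Rightarrow> ereal" where
  "growth_rate Y \<omega> k = Limsup at_top (\<lambda>t::real. ereal (1 / t) * eln (Y \<omega> t k))"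

end

theory Submission imports Defs begin

lemma si_of_int:
  fixes f :: "'a \<Rightarrow> real"
  assumes "integrable M f" "A \<in> sets M"
  shows "set_integrable M A f"
  unfolding set_integrable_def using integrable_mult_indicator[OF assms(2,1)] by simp

lemma submart_step:
  fixes M :: "'a measure"
  assumes P: "prob_space M"
    and sub: "\<And>t. 0 \<le> t \<Longrightarrow> subalgebra M (F t)"
    and sm: "submartingale M F Z"
    and st: "0 \<le> s" "s \<le> t" and A: "A \<in> sets (F s)"
  shows "(\<integral>x\<in>A. Z s x \<partial>M) \<le> (\<integral>x\<in>A. Z t x \<partial>M)"
proof -
  interpret prob_space M by fact
  interpret finite_measure_subalgebra M "F s"
    by unfold_locales (use sub st in auto)
  have AM: "A \<in> sets M" using A subalg unfolding subalgebra_def by auto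
  have it: "integrable M (Z t)" and iS: "integrable M (Z s)"
    using sm st unfolding submartingale_def by auto
  have ae: "AE x in M. Z s x \<le> real_cond_exp M (F s) (Z t) x"
    using sm st unfolding submartingale_def by auto
  have "(\<integral>x\<in>A. Z s x \<partial>M) \<le> (\<integral>x\<in>A. real_cond_exp M (F s) (Z t) x \<partial>M)"
    apply (rule set_integral_mono_AE)
    using si_of_int[OF iS AM] si_of_int[OF real_cond_exp_int(1)[OF it] AM] ae by auto
  also have "\<dots> = (\<integral>x\<in>A. Z t x \<partial>M)"
    using real_cond_exp_intA[OF it A] by simp
  finally show ?thesis .
qed

lemma max_ineq:
  fixes M :: "'a measure"
  assumes P: "prob_space M"
    and sub: "\<And>t. 0 \<le> t \<Longrightarrow> subalgebra M (F t)"
    and mono: "\<And>s t. 0 \<le> s \<Longrightarrow> s \<le> t \<Longrightarrow> sets (F s) \<subseteq> sets (F t)"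
    and sm: "submartingale M F Z"
    and npos: "\<And>t x. 0 \<le> t \<Longrightarrow> x \<in> space M \<Longrightarrow> Z t x \<le> 0"
    and lam: "0 < lam"
  shows "finite S \<Longrightarrow> S \<subseteq> {s..} \<Longrightarrow> 0 \<le> s \<Longrightarrow> A \<in> sets (F s) \<Longrightarrow>
    lam * measure M (A \<inter> {x\<in>space M. \<exists>t\<in>S. Z t x \<le> - lam}) \<le> - (\<integral>x\<in>A. Z s x \<partial>M)"
proof (induction "card S" arbitrary: S s A)
  case 0
  interpret prob_space M by fact
  have AM: "A \<in> sets M" using 0 sub[of s] unfolding subalgebra_def by auto
  have "S = {}" using 0 by auto
  moreover have "(\<integral>x\<in>A. Z s x \<partial>M) \<le> (\<integral>x\<in>A. 0 \<partial>M)"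
    apply (rule set_integral_mono)
    using npos[of s] 0 AM sets.sets_into_space[OF AM] si_of_int[OF _ AM, of "Z s"] sm
    unfolding submartingale_def by (auto simp: set_integrable_def)
  ultimately show ?case by simp
next
  case (Suc n)
  interpret prob_space M by fact
  have meas: "\<And>t. 0 \<le> t \<Longrightarrow> Z t \<in> borel_measurable (F t)" and intg: "\<And>t. 0 \<le> t \<Longrightarrow> integrable M (Z t)"
    using sm unfolding submartingale_def by auto
  have subM: "\<And>t. 0 \<le> t \<Longrightarrow> sets (F t) \<subseteq> sets M" using sub unfolding subalgebra_def by auto
  have spF: "\<And>t. 0 \<le> t \<Longrightarrow> space (F t) = space M" using sub unfolding subalgebra_def by auto
  have Sne: "S \<noteq> {}" using Suc by auto
  define t0 where "t0 = Min S"
  have t0S: "t0 \<in> S" using Suc Sne unfolding t0_def by auto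
  have st0: "s \<le> t0" "0 \<le> t0" using t0S Suc by auto
  have t0min: "\<And>t. t \<in> S \<Longrightarrow> t0 \<le> t" using Suc unfolding t0_def by auto
  define B where "B = {x\<in>space M. Z t0 x \<le> - lam}"
  have BF: "B \<in> sets (F t0)"
  proof -
    have "B = {x\<in>space (F t0). Z t0 x \<le> - lam}" using spF[OF st0(2)] unfolding B_def by simp
    also have "\<dots> \<in> sets (F t0)" using meas[OF st0(2)] by measurable
    finally show ?thesis .
  qed
  have AF: "A \<in> sets (F t0)" using mono[OF Suc.prems(3) st0(1)] Suc.prems(4) by auto
  define A1 where "A1 = A \<inter> B"
  define A2 where "A2 = A - B"
  have A1F: "A1 \<in> sets (F t0)" and A2F: "A2 \<in> sets (F t0)" using AF BF unfolding A1_def A2_def by auto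
  have A1M: "A1 \<in> sets M" and A2M: "A2 \<in> sets M" and AM: "A \<in> sets M"
    using A1F A2F AF subM[OF st0(2)] by auto
  define S' where "S' = S - {t0}"
  have S'fin: "finite S'" and cS': "n = card S'" and S'sub: "S' \<subseteq> {t0..}"
    using Suc t0S t0min unfolding S'_def by auto
  have IH: "lam * measure M (A2 \<inter> {x\<in>space M. \<exists>t\<in>S'. Z t x \<le> - lam}) \<le> - (\<integral>x\<in>A2. Z t0 x \<partial>M)"
    using Suc(1)[OF cS' S'fin S'sub st0(2) A2F] .
  have Esets: "\<And>T. finite T \<Longrightarrow> T \<subseteq> {0..} \<Longrightarrow> {x\<in>space M. \<exists>t\<in>T. Z t x \<le> - lam} \<in> sets M"
  proof -
    fix T :: "real set" assume T: "finite T" "T \<subseteq> {0..}"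
    have "{x\<in>space M. \<exists>t\<in>T. Z t x \<le> - lam} = (\<Union>t\<in>T. {x\<in>space M. Z t x \<le> - lam})" by auto
    also have "\<dots> \<in> sets M"
    proof (rule sets.finite_UN[OF T(1)])
      fix t assume "t \<in> T"
      hence t: "0 \<le> t" using T by auto
      have "Z t \<in> borel_measurable M" using measurable_from_subalg[OF sub[OF t] meas[OF t]] .
      thus "{x\<in>space M. Z t x \<le> - lam} \<in> sets M" by measurable
    qed
    finally show "{x\<in>space M. \<exists>t\<in>T. Z t x \<le> - lam} \<in> sets M" .
  qed
  have S0: "S \<subseteq> {0..}" "S' \<subseteq> {0..}" using Suc.prems(2,3) S'sub st0 by auto
  have "A \<inter> {x\<in>space M. \<exists>t\<in>S. Z t x \<le> - lam} \<subseteq> A1 \<union> (A2 \<inter> {x\<in>space M. \<exists>t\<in>S'. Z t x \<le> - lam})"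
    unfolding A1_def A2_def B_def S'_def by auto
  hence "measure M (A \<inter> {x\<in>space M. \<exists>t\<in>S. Z t x \<le> - lam}) \<le> measure M (A1 \<union> (A2 \<inter> {x\<in>space M. \<exists>t\<in>S'. Z t x \<le> - lam}))"
    using A1M A2M Esets[OF S'fin S0(2)] by (intro finite_measure_mono) auto
  also have "\<dots> \<le> measure M A1 + measure M (A2 \<inter> {x\<in>space M. \<exists>t\<in>S'. Z t x \<le> - lam})"
    using A1M A2M Esets[OF S'fin S0(2)] by (intro measure_Un_le) auto
  finally have m1: "lam * measure M (A \<inter> {x\<in>space M. \<exists>t\<in>S. Z t x \<le> - lam}) \<le>
      lam * measure M A1 + lam * measure M (A2 \<inter> {x\<in>space M. \<exists>t\<in>S'. Z t x \<le> - lam})"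
    using lam mult_left_mono[of _ _ lam] by (simp add: distrib_left[symmetric])
  have i1: "lam * measure M A1 \<le> - (\<integral>x\<in>A1. Z t0 x \<partial>M)"
  proof -
    have "(\<integral>x\<in>A1. Z t0 x \<partial>M) \<le> (\<integral>x\<in>A1. (- lam) \<partial>M)"
      apply (rule set_integral_mono)
      using si_of_int[OF intg[OF st0(2)] A1M] A1M
      by (auto simp: A1_def B_def set_integrable_def less_top[symmetric] intro!: integrable_real_indicator)
    also have "\<dots> = - lam * measure M A1" using A1M set_integral_const[OF A1M, of "- lam"] by simp
    finally show ?thesis by simp
  qed
  have split: "(\<integral>x\<in>A. Z t0 x \<partial>M) = (\<integral>x\<in>A1. Z t0 x \<partial>M) + (\<integral>x\<in>A2. Z t0 x \<partial>M)"
  proof -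
    have "A = A1 \<union> A2" "A1 \<inter> A2 = {}" unfolding A1_def A2_def by auto
    thus ?thesis using set_integral_Un[of A1 A2 M "Z t0"] si_of_int[OF intg[OF st0(2)] A1M]
      si_of_int[OF intg[OF st0(2)] A2M] by simp
  qed
  have "(\<integral>x\<in>A. Z s x \<partial>M) \<le> (\<integral>x\<in>A. Z t0 x \<partial>M)"
    using submart_step[OF P sub sm Suc.prems(3) st0(1) Suc.prems(4)] by simp
  thus ?case using m1 i1 IH split by linarith
qed

lemma rat_bound:
  fixes M :: "'a measure"
  assumes P: "prob_space M"
    and sub: "\<And>t. 0 \<le> t \<Longrightarrow> subalgebra M (F t)"
    and mono: "\<And>s t. 0 \<le> s \<Longrightarrow> s \<le> t \<Longrightarrow> sets (F s) \<subseteq> sets (F t)"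
    and sm: "submartingale M F Z"
    and npos: "\<And>t x. 0 \<le> t \<Longrightarrow> x \<in> space M \<Longrightarrow> Z t x \<le> 0"
  shows "AE x in M. \<exists>C. \<forall>q\<in>\<rat> \<inter> {0..}. - C < Z q x"
proof -
  interpret prob_space M by fact
  define Q where "Q = \<rat> \<inter> {0::real..}"
  have Qc: "countable Q" unfolding Q_def using countable_rat by auto
  have Qne: "Q \<noteq> {}" unfolding Q_def by (metis Int_iff Rats_0 atLeast_iff empty_iff order_refl)
  define f where "f = from_nat_into Q"
  have rf: "range f = Q" unfolding f_def using range_from_nat_into[OF Qne Qc] .
  have Q0: "Q \<subseteq> {0..}" unfolding Q_def by auto
  have meas: "\<And>t. 0 \<le> t \<Longrightarrow> Z t \<in> borel_measurable M"
    using sm sub unfolding submartingale_def by (metis measurable_from_subalg)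
  define c0 where "c0 = - (\<integral>x\<in>space M. Z 0 x \<partial>M)"
  have spF0: "space M \<in> sets (F 0)" using sub[of 0] unfolding subalgebra_def by (metis order_refl sets.top)
  have Esets: "\<And>T lam. countable T \<Longrightarrow> T \<subseteq> {0..} \<Longrightarrow> {x\<in>space M. \<exists>t\<in>T. Z t x \<le> - lam} \<in> sets M"
  proof -
    fix T :: "real set" and lam :: real assume T: "countable T" "T \<subseteq> {0..}"
    have "{x\<in>space M. \<exists>t\<in>T. Z t x \<le> - lam} = (\<Union>t\<in>T. {x\<in>space M. Z t x \<le> - lam})" by auto
    also have "\<dots> \<in> sets M"
    proof (rule sets.countable_UN''[OF T(1)])
      fix t assume "t \<in> T"
      hence t: "0 \<le> t" using T by auto
      show "{x\<in>space M. Z t x \<le> - lam} \<in> sets M" using meas[OF t] by measurable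
    qed
    finally show "{x\<in>space M. \<exists>t\<in>T. Z t x \<le> - lam} \<in> sets M" .
  qed
  have bnd: "measure M {x\<in>space M. \<exists>t\<in>Q. Z t x \<le> - lam} \<le> c0 / lam" if lam: "0 < lam" for lam
  proof -
    define E where "E n = {x\<in>space M. \<exists>t\<in>f ` {..n}. Z t x \<le> - lam}" for n
    have Er: "range E \<subseteq> sets M"
    proof safe
      fix n
      have "f ` {..n} \<subseteq> {0..}" using rf Q0 by auto
      thus "E n \<in> sets M" unfolding E_def using Esets[of "f ` {..n}" lam] by auto
    qed
    have Ei: "incseq E" unfolding E_def incseq_def by auto
    have EU: "(\<Union>n. E n) = {x\<in>space M. \<exists>t\<in>Q. Z t x \<le> - lam}" unfolding E_def rf[symmetric] by auto
    have "lam * measure M (space M \<inter> E n) \<le> c0" for n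
      unfolding c0_def E_def using max_ineq[OF P sub mono sm npos lam, of "f ` {..n}" 0 "space M"] rf Q0 spF0
      by (metis finite_atMost finite_imageI image_mono subset_UNIV atLeast_iff order_refl subset_trans)
    hence "measure M (E n) \<le> c0 / lam" for n
      using lam Er by (simp add: field_simps Int_absorb1 sets.sets_into_space)
    moreover have "(\<lambda>n. measure M (E n)) \<longlonglongrightarrow> measure M (\<Union>n. E n)"
      by (rule finite_Lim_measure_incseq[OF Er Ei])
    ultimately have "measure M (\<Union>n. E n) \<le> c0 / lam"
      by (intro LIMSEQ_le_const2) auto
    thus ?thesis using EU by simp
  qed
  define N where "N = {x\<in>space M. \<forall>k::nat. \<exists>t\<in>Q. Z t x \<le> - real (Suc k)}"
  have NM: "N \<in> sets M"
  proof -
    have "N = (\<Inter>k. {x\<in>space M. \<exists>t\<in>Q. Z t x \<le> - real (Suc k)})" unfolding N_def by auto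
    also have "\<dots> \<in> sets M" by (rule sets.countable_INT) (use Esets[OF Qc Q0] in \<open>auto simp del: of_nat_Suc\<close>)
    finally show ?thesis .
  qed
  have "measure M N \<le> c0 / real (Suc k)" for k
  proof -
    have "measure M N \<le> measure M {x\<in>space M. \<exists>t\<in>Q. Z t x \<le> - real (Suc k)}"
      using NM Esets[OF Qc Q0, of "real (Suc k)"] unfolding N_def by (intro finite_measure_mono) (auto simp del: of_nat_Suc)
    thus ?thesis using bnd[of "real (Suc k)"] by simp
  qed
  moreover have "(\<lambda>k. c0 / real (Suc k)) \<longlonglongrightarrow> 0"
    by (intro tendsto_divide_0[OF tendsto_const] filterlim_at_top_imp_at_infinity filterlim_compose[OF filterlim_real_sequentially filterlim_Suc])
  ultimately have "measure M N \<le> 0" by (intro LIMSEQ_le_const[of "\<lambda>k. c0 / real (Suc k)"]) (auto simp del: of_nat_Suc)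
  hence "measure M N = 0" using measure_nonneg[of M N] by linarith
  hence "N \<in> null_sets M" using NM by (simp add: null_sets_def emeasure_eq_measure)
  thus ?thesis
  proof (rule AE_I')
    show "{x \<in> space M. \<not> (\<exists>C. \<forall>q\<in>\<rat> \<inter> {0..}. - C < Z q x)} \<subseteq> N"
      unfolding N_def Q_def apply (auto simp: not_less)
      subgoal for x k by (drule spec[of _ "1 + real k"]) (auto simp: algebra_simps)
      done
  qed
qed

lemma right_lower_bound:
  fixes r :: "real \<Rightarrow> real"
  assumes t: "0 \<le> t" and cont: "continuous (at_right t) r"
    and b: "\<And>q. q \<in> \<rat> \<Longrightarrow> 0 \<le> q \<Longrightarrow> c \<le> r q"
  shows "c \<le> r t"
proof -
  have "\<forall>n::nat. \<exists>q\<in>\<rat>. t < q \<and> q < t + 1 / real (Suc n)"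
    by (intro allI Rats_dense_in_real) auto
  then obtain q where q: "\<And>n. q n \<in> \<rat>" "\<And>n. t < q n" "\<And>n. q n < t + 1 / real (Suc n)"
    by metis
  have "(\<lambda>n. t + 1 / real (Suc n)) \<longlonglongrightarrow> t + 0"
    by (intro tendsto_add tendsto_const) (rule LIMSEQ_inverse_real_of_nat[unfolded inverse_eq_divide])
  hence "q \<longlonglongrightarrow> t"
    by (intro tendsto_sandwich[of "\<lambda>_. t" q _ "\<lambda>n. t + 1 / real (Suc n)"]) (use q(2,3) in \<open>auto intro!: always_eventually less_imp_le\<close>)
  hence "filterlim q (at_right t) sequentially"
    unfolding filterlim_at using q(2) by (auto intro!: always_eventually)
  moreover have "(r \<longlongrightarrow> r t) (at_right t)" using cont by (simp add: continuous_within)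
  ultimately have "(\<lambda>n. r (q n)) \<longlonglongrightarrow> r t" by (rule filterlim_compose[rotated])
  moreover have "\<And>n. c \<le> r (q n)" using b q t by (meson less_imp_le order_trans)
  ultimately show ?thesis by (intro LIMSEQ_le_const) auto
qed

lemma growth_cmp:
  fixes f g :: "real \<Rightarrow> real" and C :: real
  assumes pos: "\<And>t. 0 \<le> t \<Longrightarrow> 0 < g t"
    and le: "\<And>t. 0 \<le> t \<Longrightarrow> 0 < f t \<Longrightarrow> ln (f t) \<le> ln (g t) + C"
  shows "Limsup at_top (\<lambda>t::real. ereal (1 / t) * eln (f t)) \<le> Limsup at_top (\<lambda>t::real. ereal (1 / t) * eln (g t))"
proof (rule ereal_le_epsilon2)
  fix e :: real assume e: "0 < e"
  have ev: "eventually (\<lambda>t. ereal (1 / t) * eln (f t) \<le> ereal (1 / t) * eln (g t) + ereal e) at_top"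
    using eventually_ge_at_top[of "max 1 (\<bar>C\<bar> / e)"]
  proof eventually_elim
    case (elim t)
    hence t: "1 \<le> t" "\<bar>C\<bar> / e \<le> t" by auto
    have tp: "0 < t" using t by auto
    have Ce: "C / t \<le> e" using t tp e by (auto simp: field_simps abs_le_iff)
    have ge: "eln (g t) = ereal (ln (g t))" using pos[of t] tp unfolding eln_def by auto
    show ?case
    proof (cases "0 < f t")
      case False
      hence "eln (f t) = - \<infinity>" unfolding eln_def by auto
      thus ?thesis using tp by (simp add: ge)
    next
      case True
      hence "ln (f t) / t \<le> ln (g t) / t + C / t" using le[of t] tp by (simp add: add_divide_distrib[symmetric] divide_right_mono)
      hence "ln (f t) / t \<le> ln (g t) / t + e" using Ce by linarith
      thus ?thesis using True tp pos[of t] unfolding eln_def ge by simp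
    qed
  qed
  have "Limsup at_top (\<lambda>t::real. ereal (1 / t) * eln (f t)) \<le> Limsup at_top (\<lambda>t::real. ereal (1 / t) * eln (g t) + ereal e)"
    by (rule Limsup_mono[OF ev])
  also have "\<dots> = Limsup at_top (\<lambda>t::real. ereal (1 / t) * eln (g t)) + ereal e"
    by (rule Limsup_add_ereal_right) auto
  finally show "Limsup at_top (\<lambda>t::real. ereal (1 / t) * eln (f t)) \<le> Limsup at_top (\<lambda>t::real. ereal (1 / t) * eln (g t)) + ereal e" .
qed

theorem mainTheorem9:
  fixes M :: "'a measure" and F :: "real \<Rightarrow> 'a measure"
    and X :: "'a \<Rightarrow> real \<Rightarrow> 'n::finite \<Rightarrow> real"
    and m :: "'m::finite" and L :: "('a, 'm, 'n) strategy"
    and y0 :: "'m \<Rightarrow> real" and Ls :: "'m \<Rightarrow> ('a, 'm, 'n) strategy"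
    and Y :: "'a \<Rightarrow> real \<Rightarrow> 'm \<Rightarrow> real"
  assumes "prob_space M"
    and "usual_filtration M F"
    and "payoff_process M F X"
    and "CARD('m) \<ge> 2"
    and "rel_growth_optimal M F X m L"
    and "\<forall>k. 0 < y0 k"
    and "feasible M F X y0 Ls"
    and "Ls m = L"
    and "is_wealth M F X y0 Ls Y"
  shows "(AE \<omega> in M. 0 < (INF t\<in>{0..}. relw Y \<omega> t m)) \<and>
         (\<forall>k. AE \<omega> in M. growth_rate Y \<omega> m \<ge> growth_rate Y \<omega> k)"
proof -
  interpret prob_space M by fact
  have sub: "\<And>t. 0 \<le> t \<Longrightarrow> subalgebra M (F t)"
    and mono: "\<And>s t. 0 \<le> s \<Longrightarrow> s \<le> t \<Longrightarrow> sets (F s) \<subseteq> sets (F t)"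
  proof -
    have sub': "\<forall>t\<ge>0. subalgebra M (F t)"
      using assms(2) unfolding usual_filtration_def by (rule conjunct1[OF conjunct2])
    have mono': "\<forall>s t. 0 \<le> s \<longrightarrow> s \<le> t \<longrightarrow> sets (F s) \<subseteq> sets (F t)"
      using assms(2) unfolding usual_filtration_def by (rule conjunct1[OF conjunct2[OF conjunct2]])
    show "\<And>t. 0 \<le> t \<Longrightarrow> subalgebra M (F t)" using sub' by blast
    show "\<And>s t. 0 \<le> s \<Longrightarrow> s \<le> t \<Longrightarrow> sets (F s) \<subseteq> sets (F t)" using mono' by blast
  qed
  have rgo: "(AE \<omega> in M. \<forall>t\<ge>0. 0 < Y \<omega> t m) \<and> submartingale M F (\<lambda>t \<omega>. ln (relw Y \<omega> t m))"
  proof -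
    have "\<forall>y0 Ls Y. (\<forall>k. 0 < y0 k) \<and> feasible M F X y0 Ls \<and> Ls m = L \<and> is_wealth M F X y0 Ls Y \<longrightarrow>
        (AE \<omega> in M. \<forall>t\<ge>0. 0 < Y \<omega> t m) \<and>
        submartingale M F (\<lambda>t \<omega>. ln (relw Y \<omega> t m))"
      using assms(5) unfolding rel_growth_optimal_def by (rule conjunct2)
    hence "(\<forall>k. 0 < y0 k) \<and> feasible M F X y0 Ls \<and> Ls m = L \<and> is_wealth M F X y0 Ls Y \<longrightarrow>
        (AE \<omega> in M. \<forall>t\<ge>0. 0 < Y \<omega> t m) \<and>
        submartingale M F (\<lambda>t \<omega>. ln (relw Y \<omega> t m))" by (rule spec[of _ Y, OF spec[of _ Ls, OF spec[of _ y0]]])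
    thus ?thesis using assms(6,7,8,9) by (rule mp[OF _ conjI[OF _ conjI[OF _ conjI]]])
  qed
  have Ynn: "\<And>\<omega> t k. \<omega> \<in> space M \<Longrightarrow> 0 \<le> t \<Longrightarrow> 0 \<le> Y \<omega> t k"
    and Ycont: "\<And>\<omega> k t. \<omega> \<in> space M \<Longrightarrow> 0 \<le> t \<Longrightarrow> continuous (at_right t) (\<lambda>t. Y \<omega> t k)"
  proof -
    have W2: "\<forall>\<omega>\<in>space M. \<forall>m. cadlag (\<lambda>t. Y \<omega> t m) \<and> (\<forall>t\<ge>0. 0 \<le> Y \<omega> t m)"
      using assms(9) unfolding is_wealth_def by (rule conjunct1[OF conjunct2])
    show "\<And>\<omega> t k. \<omega> \<in> space M \<Longrightarrow> 0 \<le> t \<Longrightarrow> 0 \<le> Y \<omega> t k" using W2 by blast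
    show "\<And>\<omega> k t. \<omega> \<in> space M \<Longrightarrow> 0 \<le> t \<Longrightarrow> continuous (at_right t) (\<lambda>t. Y \<omega> t k)"
      using W2 unfolding cadlag_def by blast
  qed
  have sumge: "Y \<omega> t j \<le> (\<Sum>k\<in>UNIV. Y \<omega> t k)" if "\<omega> \<in> space M" "0 \<le> t" for \<omega> t j
    using Ynn[OF that] by (intro member_le_sum) auto
  have npos: "\<And>t \<omega>. 0 \<le> t \<Longrightarrow> \<omega> \<in> space M \<Longrightarrow> ln (relw Y \<omega> t m) \<le> 0"
  proof -
    fix t :: real and \<omega> assume t: "0 \<le> t" and w: "\<omega> \<in> space M"
    have "0 \<le> relw Y \<omega> t m" "relw Y \<omega> t m \<le> 1"
      unfolding relw_def using Ynn[OF w t] sumge[OF w t, of m] sum_nonneg[of UNIV "Y \<omega> t"]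
      by (auto intro!: divide_nonneg_nonneg sum_nonneg simp: divide_le_eq_1)
    thus "ln (relw Y \<omega> t m) \<le> 0" by (cases "relw Y \<omega> t m = 0") auto
  qed
  have rb: "AE x in M. \<exists>C. \<forall>q\<in>\<rat> \<inter> {0..}. - C < ln (relw Y x q m)"
    using rat_bound[OF assms(1) sub mono conjunct2[OF rgo] npos] by simp
  have key: "AE \<omega> in M. \<exists>c>0. \<forall>t\<ge>0. c \<le> relw Y \<omega> t m \<and> 0 < Y \<omega> t m"
    using rb conjunct1[OF rgo] AE_space
  proof eventually_elim
    case (elim \<omega>)
    then obtain C where C: "\<And>q. q \<in> \<rat> \<Longrightarrow> 0 \<le> q \<Longrightarrow> - C < ln (relw Y \<omega> q m)" by auto
    have w: "\<omega> \<in> space M" and pos: "\<And>t. 0 \<le> t \<Longrightarrow> 0 < Y \<omega> t m" using elim by auto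
    have sp: "\<And>t. 0 \<le> t \<Longrightarrow> 0 < (\<Sum>k\<in>UNIV. Y \<omega> t k)" using sumge[OF w] pos by (meson less_le_trans)
    have rpos: "\<And>t. 0 \<le> t \<Longrightarrow> 0 < relw Y \<omega> t m" unfolding relw_def using sp pos by auto
    have "exp (- C) \<le> relw Y \<omega> t m" if t: "0 \<le> t" for t
    proof (rule right_lower_bound[OF t])
      show "continuous (at_right t) (\<lambda>t. relw Y \<omega> t m)"
        unfolding relw_def
        using Ycont[OF w t] sp[OF t] trivial_limit_at_right_real[of t]
        by (intro continuous_divide continuous_sum) (auto simp: Lim_ident_at)
      fix q :: real assume "q \<in> \<rat>" "0 \<le> q"
      hence "- C < ln (relw Y \<omega> q m)" "0 < relw Y \<omega> q m" using C rpos by auto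
      thus "exp (- C) \<le> relw Y \<omega> q m" by (metis exp_less_cancel_iff exp_ln less_imp_le)
    qed
    thus ?case using pos by (intro exI[of _ "exp (- C)"]) auto
  qed
  show ?thesis
  proof
    show "AE \<omega> in M. 0 < (INF t\<in>{0..}. relw Y \<omega> t m)"
      using key
    proof eventually_elim
      case (elim \<omega>)
      then obtain c where c: "0 < c" "\<And>t. 0 \<le> t \<Longrightarrow> c \<le> relw Y \<omega> t m" by auto
      have "c \<le> (INF t\<in>{0..}. relw Y \<omega> t m)" using c by (intro cINF_greatest) auto
      thus ?case using c by linarith
    qed
    show "\<forall>k. AE \<omega> in M. growth_rate Y \<omega> m \<ge> growth_rate Y \<omega> k"
    proof
      fix k
      show "AE \<omega> in M. growth_rate Y \<omega> m \<ge> growth_rate Y \<omega> k"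
        using key AE_space
      proof eventually_elim
        case (elim \<omega>)
        then obtain c where c: "0 < c" "\<And>t. 0 \<le> t \<Longrightarrow> c \<le> relw Y \<omega> t m \<and> 0 < Y \<omega> t m" by auto
        have w: "\<omega> \<in> space M" using elim by auto
        show ?case unfolding growth_rate_def
        proof (rule growth_cmp[where C = "- ln c"])
          fix t :: real assume t: "0 \<le> t"
          thus "0 < Y \<omega> t m" using c by auto
          assume yk: "0 < Y \<omega> t k"
          have s: "0 < (\<Sum>k\<in>UNIV. Y \<omega> t k)" using sumge[OF w t, of m] c(2)[OF t] by linarith
          have "c * (\<Sum>k\<in>UNIV. Y \<omega> t k) \<le> Y \<omega> t m"
            using c(2)[OF t] s unfolding relw_def by (simp add: le_divide_eq)
          hence "c * Y \<omega> t k \<le> Y \<omega> t m" using sumge[OF w t, of k] c(1)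
            by (meson mult_left_mono less_imp_le order_trans)
          hence "ln (c * Y \<omega> t k) \<le> ln (Y \<omega> t m)" using c(1) c(2)[OF t] yk by (subst ln_le_cancel_iff) auto
          thus "ln (Y \<omega> t k) \<le> ln (Y \<omega> t m) + - ln c" using c(1) yk by (simp add: ln_mult)
        qed
      qed
    qed
  qed
qed

end
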